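(* Let $n,p\ge 1$, let $\boldsymbol{\beta}^{0}\in\mathbb{R}^{p}$, and let $\mathbf{x}_1,\dots,\mathbf{x}_n\in\mathbb{R}^p$ (true covariates), $\mathbf{u}_1,\dots,\mathbf{u}_n\in\mathbb{R}^p$ (measurement errors), $\mathbf{w}_i=\mathbf{x}_i+\mathbf{u}_i$ (measured covariates), and $y_1,\dots,y_n\in\mathbb{R}$ (responses). Let $\mathbf{W}=(\mathbf{w}_1,\dots,\mathbf{w}_n)^T$ and $\mathbf{U}=(\mathbf{u}_1,\dots,\mathbf{u}_n)^T$, with entries $w_{ij}$, $u_{ij}$, and assume the measurements are standardized: $\frac1n\sum_{i=1}^n w_{ij}=0$ and $\frac1n\sum_{i=1}^n w_{ij}^2=1$ for $j=1,\dots,p$. Let $\mu:\mathbb{R}\to\mathbb{R}$ be the GLM mean function, assumed infinitely differentiable with $r$th derivative $\mu^{(r)}$, and assume that for each $i$ its Taylor series around $\mathbf{w}_i^T\boldsymbol{\beta}^0$ converges to $\mu(\mathbf{x}_i^T\boldsymbol{\beta}^0)$, i.e. $$\mu(\mathbf{x}_i^T\boldsymbol{\beta}^0)=\sum_{r=0}^\infty \frac{\mu^{(r)}(\mathbf{w}_i^T\boldsymbol{\beta}^0)}{r!}\left(-\mathbf{u}_i^T\boldsymbol{\beta}^0\right)^r,\quad i=1,\dots,n.$$ Let $\epsilon_i=y_i-\mu(\mathbf{x}_i^T\boldsymbol{\beta}^0)$ and $\boldsymbol{\epsilon}=(\epsilon_1,\dots,\epsilon_n)^T$. Suppose $\lambda\ge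 0$ and $\delta\ge 0$ satisfy $$\frac1n\left\|\mathbf{W}^T\boldsymbol{\epsilon}\right\|_\infty\le\lambda\quad\text{and}\quad \|\mathbf{U}\|_\infty=\max_{i,j}|u_{ij}|\le\delta.$$ Then $\boldsymbol{\beta}^0\in\Theta$, where $$\Theta=\left\{\boldsymbol{\beta}\in\mathbb{R}^p:\ \frac1n\max_{1\le j\le p}\left|\sum_{i=1}^n w_{ij}\left\{y_i-\mu(\mathbf{w}_i^T\boldsymbol{\beta})\right\}\right|\le \lambda+\sum_{r=1}^\infty\frac{\delta^r}{r!\sqrt n}\|\boldsymbol{\beta}\|_1^r\left\|\boldsymbol{\mu}^{(r)}(\mathbf{W}\boldsymbol{\beta})\right\|_2\right\},$$ with $\boldsymbol{\mu}^{(r)}(\mathbf{W}\boldsymbol{\beta})=\left(\mu^{(r)}(\mathbf{w}_1^T\boldsymbol{\beta}),\dots,\mu^{(r)}(\mathbf{w}_n^T\boldsymbol{\beta})\right)^T$.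
   Context: This is the setting of a generalized linear model with canonical link: the response has density $\exp\{y\theta-b(\theta)+c(y,\phi)\}$ with linear predictor $\theta=\mathbf{x}^T\boldsymbol{\beta}^0$, and the mean function is $\mu(\theta)=b'(\theta)$ (e.g. $\mu(\theta)=(1+e^{-\theta})^{-1}$ for logistic regression, $\mu(\theta)=e^\theta$ for Poisson regression). The covariates are observed only through the additive measurement error model $\mathbf{w}_i=\mathbf{x}_i+\mathbf{u}_i$. Here $\|\cdot\|_\infty$ denotes the maximum absolute component (entry) norm of a vector or matrix, $\|\cdot\|_1$ and $\|\cdot\|_2$ the usual $\ell_1$ and $\ell_2$ vector norms. *)

theory Defs
  imports "HOL-Analysis.Analysis"
begin

definition mu_deriv :: "(real \<Rightarrow> real) \<Rightarrow> nat \<Rightarrow> real \<Rightarrow> real" where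
  "mu_deriv \<mu> r = (deriv ^^ r) \<mu>"

text \<open>Observations are indexed by a finite type 'n (n = CARD('n)),
  covariates live in real^'p (p = CARD('p)). The series on the right-hand side has
  nonnegative terms and is summed in ennreal (value infinity if it diverges).\<close>
definition Theta ::
  "(real \<Rightarrow> real) \<Rightarrow> ('n::finite \<Rightarrow> real^'p::finite) \<Rightarrow> ('n \<Rightarrow> real) \<Rightarrow> real \<Rightarrow> real \<Rightarrow> (real^'p) set" where
  "Theta \<mu> w y lam \<delta> =
    {\<beta>. ennreal ((1 / real CARD('n)) *
            Max (range (\<lambda>j. \<bar>\<Sum>i\<in>UNIV. w i $ j * (y i - \<mu> (w i \<bullet> \<beta>))\<bar>)))
        \<le> ennreal lam +
          (\<Sum>r. ennreal (\<delta> ^ Suc r / (fact (Suc r) * sqrt (real CARD('n)))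
                 * (\<Sum>j\<in>UNIV. \<bar>\<beta> $ j\<bar>) ^ Suc r
                 * sqrt (\<Sum>i\<in>UNIV. (mu_deriv \<mu> (Suc r) (w i \<bullet> \<beta>))\<^sup>2)))}"

end

theory Submission
  imports Defs
begin

lemma cs_sum:
  fixes a b :: "'n::finite \<Rightarrow> real"
  shows "\<bar>\<Sum>i\<in>UNIV. a i * b i\<bar> \<le> sqrt (\<Sum>i\<in>UNIV. (a i)\<^sup>2) * sqrt (\<Sum>i\<in>UNIV. (b i)\<^sup>2)"
proof -
  have nrm: "norm (\<chi> i. f i) = sqrt (\<Sum>i\<in>UNIV. (f i)\<^sup>2)" for f :: "'n \<Rightarrow> real"
    unfolding norm_vec_def L2_set_def by simp
  have inr: "(\<chi> i. a i) \<bullet> (\<chi> i. b i) = (\<Sum>i\<in>UNIV. a i * b i)"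
    unfolding inner_vec_def by simp
  have "\<bar>(\<chi> i. a i) \<bullet> (\<chi> i. b i)\<bar> \<le> norm (\<chi> i. a i) * norm (\<chi> i. b i)"
    by (rule Cauchy_Schwarz_ineq2)
  thus ?thesis unfolding nrm inr .
qed

lemma ennreal_abs_suminf_le:
  fixes c :: "nat \<Rightarrow> real"
  assumes "summable c"
  shows "ennreal \<bar>suminf c\<bar> \<le> (\<Sum>r. ennreal \<bar>c r\<bar>)"
proof (cases "summable (\<lambda>r. \<bar>c r\<bar>)")
  case True
  have e: "(\<Sum>r. ennreal \<bar>c r\<bar>) = ennreal (\<Sum>r. \<bar>c r\<bar>)"
    by (rule suminf_ennreal2) (rule abs_ge_zero, rule True)
  show ?thesis unfolding e by (rule ennreal_leI[OF summable_rabs[OF True]])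
next
  case False
  have "(\<Sum>r. ennreal \<bar>c r\<bar>) = top"
  proof (rule ccontr)
    assume "(\<Sum>r. ennreal \<bar>c r\<bar>) \<noteq> top"
    then have "summable (\<lambda>r. \<bar>c r\<bar>)" by (rule summable_suminf_not_top[rotated]) (rule abs_ge_zero)
    with False show False by contradiction
  qed
  then show ?thesis by (simp only: top_greatest)
qed

theorem proposition1:
  fixes \<beta>0 :: "real^'p::finite"
    and x u w :: "'n::finite \<Rightarrow> real^'p"
    and y :: "'n \<Rightarrow> real"
    and \<mu> :: "real \<Rightarrow> real"
    and lam \<delta> :: real
  assumes w_def: "\<And>i. w i = x i + u i"
    and std_mean: "\<And>j. (1 / real CARD('n)) * (\<Sum>i\<in>UNIV. w i $ j) = 0"
    and std_var: "\<And>j. (1 / real CARD('n)) * (\<Sum>i\<in>UNIV. (w i $ j)\<^sup>2) = 1"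
    and smooth: "\<And>r t. mu_deriv \<mu> r differentiable (at t)"
    and taylor: "\<And>i. (\<lambda>r. mu_deriv \<mu> r (w i \<bullet> \<beta>0) / fact r * (- (u i \<bullet> \<beta>0)) ^ r)
                        sums \<mu> (x i \<bullet> \<beta>0)"
    and lam_nonneg: "lam \<ge> 0" and delta_nonneg: "\<delta> \<ge> 0"
    and lam_bound: "(1 / real CARD('n)) *
          Max (range (\<lambda>j. \<bar>\<Sum>i\<in>UNIV. w i $ j * (y i - \<mu> (x i \<bullet> \<beta>0))\<bar>)) \<le> lam"
    and U_bound: "Max (range (\<lambda>(i, j). \<bar>u i $ j\<bar>)) \<le> \<delta>"
  shows "\<beta>0 \<in> Theta \<mu> w y lam \<delta>"
proof -
  define n where "n = real CARD('n)"
  have npos: "n > 0" unfolding n_def by simp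
  define a where "a i = w i \<bullet> \<beta>0" for i
  define L where "L = (\<Sum>j\<in>UNIV. \<bar>\<beta>0 $ j\<bar>)"
  define m where "m r i = mu_deriv \<mu> (Suc r) (a i)" for r i
  define d where "d r i = m r i / fact (Suc r) * (- (u i \<bullet> \<beta>0)) ^ Suc r" for r i
  define B where "B r = \<delta> ^ Suc r / (fact (Suc r) * sqrt n) * L ^ Suc r
                 * sqrt (\<Sum>i\<in>UNIV. (m r i)\<^sup>2)" for r
  have Lnn: "L \<ge> 0" unfolding L_def by (simp add: sum_nonneg)
  have mu0: "mu_deriv \<mu> 0 = \<mu>" by (simp add: mu_deriv_def)
  have dsum: "(\<lambda>r. d r i) sums (\<mu> (x i \<bullet> \<beta>0) - \<mu> (a i))" for i
  proof -
    define F where "F = (\<lambda>r. mu_deriv \<mu> r (w i \<bullet> \<beta>0) / fact r * (- (u i \<bullet> \<beta>0)) ^ r)"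
    have F0: "F 0 = \<mu> (a i)" by (simp add: F_def mu0 a_def)
    have "F sums ((\<mu> (x i \<bullet> \<beta>0) - \<mu> (a i)) + F 0)"
      unfolding F0 using taylor[of i] unfolding F_def by simp
    then have "(\<lambda>r. F (Suc r)) sums (\<mu> (x i \<bullet> \<beta>0) - \<mu> (a i))"
      by (rule sums_Suc_iff[THEN iffD2])
    moreover have "(\<lambda>r. d r i) = (\<lambda>r. F (Suc r))"
      by (simp add: F_def d_def m_def a_def)
    ultimately show ?thesis by simp
  qed
  have ubound: "\<bar>u i $ j\<bar> \<le> \<delta>" for i j
  proof -
    have "\<bar>u i $ j\<bar> \<le> Max (range (\<lambda>(i, j). \<bar>u i $ j\<bar>))"
      by (rule Max_ge) (auto intro!: range_eqI[where x="(i,j)"])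
    with U_bound show ?thesis by linarith
  qed
  have uinner: "\<bar>u i \<bullet> \<beta>0\<bar> \<le> \<delta> * L" for i
  proof -
    have "\<bar>u i \<bullet> \<beta>0\<bar> = \<bar>\<Sum>j\<in>UNIV. u i $ j * \<beta>0 $ j\<bar>" by (simp add: inner_vec_def)
    also have "\<dots> \<le> (\<Sum>j\<in>UNIV. \<bar>u i $ j * \<beta>0 $ j\<bar>)" by (rule sum_abs)
    also have "\<dots> \<le> (\<Sum>j\<in>UNIV. \<delta> * \<bar>\<beta>0 $ j\<bar>)"
      by (rule sum_mono) (simp add: abs_mult mult_right_mono ubound)
    also have "\<dots> = \<delta> * L" by (simp add: L_def sum_distrib_left)
    finally show ?thesis .
  qed
  have main: "ennreal ((1 / n) * \<bar>\<Sum>i\<in>UNIV. w i $ j * (y i - \<mu> (a i))\<bar>)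
      \<le> ennreal lam + (\<Sum>r. ennreal (B r))" for j
  proof -
    define E where "E = (\<Sum>i\<in>UNIV. w i $ j * (y i - \<mu> (x i \<bullet> \<beta>0)))"
    define c where "c r = (1 / n) * (\<Sum>i\<in>UNIV. w i $ j * d r i)" for r
    have csum: "c sums ((1 / n) * (\<Sum>i\<in>UNIV. w i $ j * (\<mu> (x i \<bullet> \<beta>0) - \<mu> (a i))))"
      unfolding c_def by (intro sums_mult sums_sum sums_mult dsum)
    have Sdec: "(\<Sum>i\<in>UNIV. w i $ j * (y i - \<mu> (a i)))
        = E + (\<Sum>i\<in>UNIV. w i $ j * (\<mu> (x i \<bullet> \<beta>0) - \<mu> (a i)))"
      unfolding E_def by (simp add: sum.distrib[symmetric] algebra_simps)
    have Ebound: "(1 / n) * \<bar>E\<bar> \<le> lam"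
    proof -
      have "\<bar>E\<bar> \<le> Max (range (\<lambda>j. \<bar>\<Sum>i\<in>UNIV. w i $ j * (y i - \<mu> (x i \<bullet> \<beta>0))\<bar>))"
        unfolding E_def by (rule Max_ge) auto
      then have "(1 / n) * \<bar>E\<bar> \<le> (1 / n) * Max (range (\<lambda>j. \<bar>\<Sum>i\<in>UNIV. w i $ j * (y i - \<mu> (x i \<bullet> \<beta>0))\<bar>))"
        using npos by (intro mult_left_mono) auto
      with lam_bound show ?thesis unfolding n_def by linarith
    qed
    have wsq: "(\<Sum>i\<in>UNIV. (w i $ j)\<^sup>2) = n"
      using std_var[of j] npos unfolding n_def[symmetric] by (simp add: field_simps)
    have cbound: "\<bar>c r\<bar> \<le> B r" for r
    proof -
      define C where "C = (\<delta> * L) ^ Suc r / fact (Suc r)"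
      have Cnn: "C \<ge> 0" unfolding C_def using delta_nonneg Lnn by simp
      have dsq: "(d r i)\<^sup>2 \<le> C\<^sup>2 * (m r i)\<^sup>2" for i
      proof -
        have "\<bar>d r i\<bar> = \<bar>m r i\<bar> / fact (Suc r) * \<bar>u i \<bullet> \<beta>0\<bar> ^ Suc r"
          by (simp add: d_def abs_mult power_abs)
        also have "\<dots> \<le> \<bar>m r i\<bar> / fact (Suc r) * (\<delta> * L) ^ Suc r"
          by (intro mult_left_mono power_mono uinner) auto
        also have "\<dots> = C * \<bar>m r i\<bar>" by (simp add: C_def)
        finally have "\<bar>d r i\<bar> \<le> C * \<bar>m r i\<bar>" .
        then have "\<bar>d r i\<bar>\<^sup>2 \<le> (C * \<bar>m r i\<bar>)\<^sup>2" by (intro power_mono) auto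
        then show ?thesis by (simp add: power_mult_distrib)
      qed
      have "\<bar>c r\<bar> = (1 / n) * \<bar>\<Sum>i\<in>UNIV. w i $ j * d r i\<bar>"
        using npos by (simp add: c_def abs_mult)
      also have "\<dots> \<le> (1 / n) * (sqrt (\<Sum>i\<in>UNIV. (w i $ j)\<^sup>2) * sqrt (\<Sum>i\<in>UNIV. (d r i)\<^sup>2))"
        using npos by (intro mult_left_mono cs_sum) auto
      also have "\<dots> \<le> (1 / n) * (sqrt n * sqrt (\<Sum>i\<in>UNIV. C\<^sup>2 * (m r i)\<^sup>2))"
      proof -
        have "sqrt (\<Sum>i\<in>UNIV. (d r i)\<^sup>2) \<le> sqrt (\<Sum>i\<in>UNIV. C\<^sup>2 * (m r i)\<^sup>2)"
          by (intro real_sqrt_le_mono sum_mono dsq)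
        then have "sqrt n * sqrt (\<Sum>i\<in>UNIV. (d r i)\<^sup>2) \<le> sqrt n * sqrt (\<Sum>i\<in>UNIV. C\<^sup>2 * (m r i)\<^sup>2)"
          by (rule mult_left_mono) (use npos in simp)
        then show ?thesis unfolding wsq
          by (rule mult_left_mono) (use npos in simp)
      qed
      also have "\<dots> = (1 / n) * sqrt n * (C * sqrt (\<Sum>i\<in>UNIV. (m r i)\<^sup>2))"
      proof -
        have "(\<Sum>i\<in>UNIV. C\<^sup>2 * (m r i)\<^sup>2) = C\<^sup>2 * (\<Sum>i\<in>UNIV. (m r i)\<^sup>2)"
          by (rule sum_distrib_left[symmetric])
        then have "sqrt (\<Sum>i\<in>UNIV. C\<^sup>2 * (m r i)\<^sup>2) = C * sqrt (\<Sum>i\<in>UNIV. (m r i)\<^sup>2)"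
          using Cnn by (simp only: real_sqrt_mult real_sqrt_abs abs_of_nonneg)
        then show ?thesis by (simp only: mult.assoc)
      qed
      also have "\<dots> = B r"
      proof -
        have sp: "sqrt n > 0" using npos by simp
        have e: "(1 / n) * sqrt n = 1 / sqrt n" using sp npos by (simp add: field_simps)
        show ?thesis unfolding e by (simp add: B_def C_def power_mult_distrib mult_ac)
      qed
      finally show ?thesis .
    qed
    have "(1 / n) * \<bar>\<Sum>i\<in>UNIV. w i $ j * (y i - \<mu> (a i))\<bar>
          \<le> (1 / n) * \<bar>E\<bar> + \<bar>suminf c\<bar>"
    proof -
      have "\<bar>\<Sum>i\<in>UNIV. w i $ j * (y i - \<mu> (a i))\<bar> \<le> \<bar>E\<bar> + \<bar>\<Sum>i\<in>UNIV. w i $ j * (\<mu> (x i \<bullet> \<beta>0) - \<mu> (a i))\<bar>"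
        unfolding Sdec by (rule abs_triangle_ineq)
      then have "(1 / n) * \<bar>\<Sum>i\<in>UNIV. w i $ j * (y i - \<mu> (a i))\<bar> \<le> (1 / n) * (\<bar>E\<bar> + \<bar>\<Sum>i\<in>UNIV. w i $ j * (\<mu> (x i \<bullet> \<beta>0) - \<mu> (a i))\<bar>)"
        using npos by (intro mult_left_mono) auto
      moreover have "\<bar>suminf c\<bar> = (1 / n) * \<bar>\<Sum>i\<in>UNIV. w i $ j * (\<mu> (x i \<bullet> \<beta>0) - \<mu> (a i))\<bar>"
        using npos unfolding sums_unique[OF csum, symmetric] by (simp add: abs_mult)
      ultimately show ?thesis by (simp add: distrib_left)
    qed
    then have "ennreal ((1 / n) * \<bar>\<Sum>i\<in>UNIV. w i $ j * (y i - \<mu> (a i))\<bar>)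
          \<le> ennreal ((1 / n) * \<bar>E\<bar> + \<bar>suminf c\<bar>)"
      by (rule ennreal_leI)
    also have "\<dots> = ennreal ((1 / n) * \<bar>E\<bar>) + ennreal \<bar>suminf c\<bar>"
      using npos by (intro ennreal_plus) auto
    also have "\<dots> \<le> ennreal lam + (\<Sum>r. ennreal \<bar>c r\<bar>)"
      using Ebound ennreal_abs_suminf_le[OF sums_summable[OF csum]]
      by (intro add_mono ennreal_leI) auto
    also have "\<dots> \<le> ennreal lam + (\<Sum>r. ennreal (B r))"
    proof (rule add_left_mono)
      show "(\<Sum>r. ennreal \<bar>c r\<bar>) \<le> (\<Sum>r. ennreal (B r))"
        using cbound by (intro suminf_le summableI ennreal_leI) auto
    qed
    finally show ?thesis .
  qed
  obtain j where j: "Max (range (\<lambda>j. \<bar>\<Sum>i\<in>UNIV. w i $ j * (y i - \<mu> (w i \<bullet> \<beta>0))\<bar>))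
      = \<bar>\<Sum>i\<in>UNIV. w i $ j * (y i - \<mu> (w i \<bullet> \<beta>0))\<bar>"
  proof -
    have "Max (range (\<lambda>j. \<bar>\<Sum>i\<in>UNIV. w i $ j * (y i - \<mu> (w i \<bullet> \<beta>0))\<bar>))
       \<in> range (\<lambda>j. \<bar>\<Sum>i\<in>UNIV. w i $ j * (y i - \<mu> (w i \<bullet> \<beta>0))\<bar>)"
      by (rule Max_in) auto
    then obtain j0 where "Max (range (\<lambda>j. \<bar>\<Sum>i\<in>UNIV. w i $ j * (y i - \<mu> (w i \<bullet> \<beta>0))\<bar>)) = \<bar>\<Sum>i\<in>UNIV. w i $ j0 * (y i - \<mu> (w i \<bullet> \<beta>0))\<bar>"
      by (rule rangeE)
    then show ?thesis by (rule that)
  qed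
  show ?thesis
    unfolding Theta_def mem_Collect_eq j
    using main[of j] unfolding B_def m_def a_def n_def L_def by assumption
qed

end
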